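(* Let $S$ be a range set with countable coinitiality, and let $X$ be an ultrametrizable topological space. Then $X$ is compact if and only if the set of all doubling metrics in $\mathrm{Ult}(X,S)$ is a dense $F_{\sigma}$ subset of $(\mathrm{Ult}(X,S),\mathcal{UD}_X^S)$.
   Context: A range set is a subset $S\subseteq[0,\infty)$ with $0\in S$. $S$ has countable coinitiality if there is a strictly decreasing sequence in $S$ converging to $0$. A metric $d$ on $X$ is $S$-valued if $d(X^2)\subseteq S$; an ultrametric is a metric satisfying $d(x,y)\le \max\{d(x,z),d(z,y)\}$ for all $x,y,z$. $\mathrm{Ult}(X,S)$ is the set of all $S$-valued ultrametrics on $X$ generating the topology of $X$. $\mathcal{UD}_X^S(d,e)$ is the infimum of all $\epsilon\in S\cup\{\infty\}$ such that for all $x,y\in X$, $d(x,y)\le\max\{e(x,y),\epsilon\}$ and $e(x,y)\le\max\{d(x,y),\epsilon\}$; this is an ultrametric on $\mathrm{Ult}(X,S)$ (possibly taking value $\infty$), and $\mathrm{Ult}(X,S)$ carries its topology. For a metric space $(X,d)$ and $A\subseteq X$, $\delta_d(A)$ is the diameter and $\alpha_d(A)=\inf\{d(x,y):x\ne y,\ x,y\in A\}$; $(X,d)$ is doubling if there exist $\beta\in(0,\infty)$, $C\in[1,\infty)$ with $\mathrm{card}(A)\le C(\delta_d(A)/\alpha_d(A))^\beta$ for every finite $A\subseteq X$ with at least two points. $F_\sigma$ means a countable union of closed sets. *)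

theory Defs
  imports "HOL-Analysis.Analysis"
begin

definition range_set :: "real set \<Rightarrow> bool" where
  "range_set S \<longleftrightarrow> S \<subseteq> {0..} \<and> 0 \<in> S"

definition countable_coinitiality :: "real set \<Rightarrow> bool" where
  "countable_coinitiality S \<longleftrightarrow>
     (\<exists>f :: nat \<Rightarrow> real. (\<forall>n. f n \<in> S) \<and> (\<forall>n. f (Suc n) < f n) \<and> f \<longlonglongrightarrow> 0)"

definition ultrametric_on :: "'a set \<Rightarrow> ('a \<Rightarrow> 'a \<Rightarrow> real) \<Rightarrow> bool" where
  "ultrametric_on M d \<longleftrightarrow> Metric_space M d \<and>
     (\<forall>x\<in>M. \<forall>y\<in>M. \<forall>z\<in>M. d x y \<le> max (d x z) (d z y))"

definition ultrametrizable_space :: "'a topology \<Rightarrow> bool" where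
  "ultrametrizable_space X \<longleftrightarrow>
     (\<exists>d. ultrametric_on (topspace X) d \<and> Metric_space.mtopology (topspace X) d = X)"

text \<open>Metrics are functions on the whole type, normalised to be 0 off the carrier,
  so that each metric on topspace X is represented by exactly one function.\<close>
definition Ult :: "'a topology \<Rightarrow> real set \<Rightarrow> ('a \<Rightarrow> 'a \<Rightarrow> real) set" where
  "Ult X S = {d. ultrametric_on (topspace X) d
                 \<and> (\<forall>x\<in>topspace X. \<forall>y\<in>topspace X. d x y \<in> S)
                 \<and> (\<forall>x y. x \<notin> topspace X \<or> y \<notin> topspace X \<longrightarrow> d x y = 0)
                 \<and> Metric_space.mtopology (topspace X) d = X}"

definition UD :: "'a topology \<Rightarrow> real set \<Rightarrow> ('a \<Rightarrow> 'a \<Rightarrow> real) \<Rightarrow> ('a \<Rightarrow> 'a \<Rightarrow> real) \<Rightarrow> ereal" where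
  "UD X S d e = Inf {\<epsilon> :: ereal. (\<epsilon> = \<infinity> \<or> (\<exists>s\<in>S. \<epsilon> = ereal s)) \<and>
      (\<forall>x\<in>topspace X. \<forall>y\<in>topspace X.
          ereal (d x y) \<le> max (ereal (e x y)) \<epsilon> \<and> ereal (e x y) \<le> max (ereal (d x y)) \<epsilon>)}"

definition ud_open :: "'a topology \<Rightarrow> real set \<Rightarrow> ('a \<Rightarrow> 'a \<Rightarrow> real) set \<Rightarrow> bool" where
  "ud_open X S U \<longleftrightarrow> U \<subseteq> Ult X S \<and>
     (\<forall>d\<in>U. \<exists>r>0. {e \<in> Ult X S. UD X S d e < ereal r} \<subseteq> U)"

lemma istopology_ud_open: "istopology (ud_open X S)"
  unfolding istopology_def
proof (intro conjI allI impI)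
  fix U V assume U: "ud_open X S U" and V: "ud_open X S V"
  show "ud_open X S (U \<inter> V)"
    unfolding ud_open_def
  proof (intro conjI ballI)
    show "U \<inter> V \<subseteq> Ult X S" using U unfolding ud_open_def by blast
    fix d assume d: "d \<in> U \<inter> V"
    obtain r where r: "r > 0" "{e \<in> Ult X S. UD X S d e < ereal r} \<subseteq> U"
      using U d unfolding ud_open_def by blast
    obtain q where q: "q > 0" "{e \<in> Ult X S. UD X S d e < ereal q} \<subseteq> V"
      using V d unfolding ud_open_def by blast
    have "{e \<in> Ult X S. UD X S d e < ereal (min r q)} \<subseteq> U \<inter> V"
    proof
      fix e assume e: "e \<in> {e \<in> Ult X S. UD X S d e < ereal (min r q)}"
      have "ereal (min r q) \<le> ereal r" "ereal (min r q) \<le> ereal q" by auto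
      then show "e \<in> U \<inter> V" using e r q by (auto dest: order.strict_trans2)
    qed
    then show "\<exists>r>0. {e \<in> Ult X S. UD X S d e < ereal r} \<subseteq> U \<inter> V"
      using r q by (metis min_less_iff_conj)
  qed
next
  fix K assume K: "\<forall>U\<in>K. ud_open X S U"
  show "ud_open X S (\<Union> K)"
    unfolding ud_open_def
  proof (intro conjI ballI)
    show "\<Union> K \<subseteq> Ult X S" using K unfolding ud_open_def by blast
    fix d assume "d \<in> \<Union> K"
    then obtain U where "U \<in> K" "d \<in> U" by blast
    then obtain r where "r > 0" "{e \<in> Ult X S. UD X S d e < ereal r} \<subseteq> U"
      using K unfolding ud_open_def by blast
    then show "\<exists>r>0. {e \<in> Ult X S. UD X S d e < ereal r} \<subseteq> \<Union> K"
      using \<open>U \<in> K\<close> by blast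
  qed
qed

definition ud_topology :: "'a topology \<Rightarrow> real set \<Rightarrow> ('a \<Rightarrow> 'a \<Rightarrow> real) topology" where
  "ud_topology X S = topology (ud_open X S)"

definition diam_d :: "('a \<Rightarrow> 'a \<Rightarrow> real) \<Rightarrow> 'a set \<Rightarrow> real" where
  "diam_d d A = Sup {d x y | x y. x \<in> A \<and> y \<in> A}"

definition sep_d :: "('a \<Rightarrow> 'a \<Rightarrow> real) \<Rightarrow> 'a set \<Rightarrow> real" where
  "sep_d d A = Inf {d x y | x y. x \<in> A \<and> y \<in> A \<and> x \<noteq> y}"

definition doubling_on :: "'a set \<Rightarrow> ('a \<Rightarrow> 'a \<Rightarrow> real) \<Rightarrow> bool" where
  "doubling_on M d \<longleftrightarrow> (\<exists>\<beta>::real. \<exists>C::real. 0 < \<beta> \<and> 1 \<le> C \<and>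
     (\<forall>A. A \<subseteq> M \<longrightarrow> finite A \<longrightarrow> 2 \<le> card A \<longrightarrow>
        real (card A) \<le> C * (diam_d d A / sep_d d A) powr \<beta>))"

end

theory Submission
  imports Defs
begin


lemma openin_ud: "openin (ud_topology X S) = ud_open X S"
  by (simp add: ud_topology_def istopology_ud_open)

lemma topspace_ud: "topspace (ud_topology X S) = Ult X S"
proof -
  have "ud_open X S (Ult X S)" unfolding ud_open_def by (auto intro: exI[of _ 1])
  moreover have "\<And>U. ud_open X S U \<Longrightarrow> U \<subseteq> Ult X S" unfolding ud_open_def by auto
  ultimately show ?thesis unfolding topspace_def openin_ud by blast
qed

lemmas emax = ereal_max[symmetric]

lemma UD_lt:
  assumes "UD X S d e < ereal r"
  shows "\<exists>s\<in>S. s < r \<and> (\<forall>x\<in>topspace X. \<forall>y\<in>topspace X. d x y \<le> max (e x y) s \<and> e x y \<le> max (d x y) s)"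
proof -
  from assms obtain \<epsilon> where e: "\<epsilon> = \<infinity> \<or> (\<exists>s\<in>S. \<epsilon> = ereal s)" "\<epsilon> < ereal r"
    "\<forall>x\<in>topspace X. \<forall>y\<in>topspace X.
          ereal (d x y) \<le> max (ereal (e x y)) \<epsilon> \<and> ereal (e x y) \<le> max (ereal (d x y)) \<epsilon>"
    unfolding UD_def Inf_less_iff by blast
  then obtain s where s: "s \<in> S" "\<epsilon> = ereal s" by auto
  have "s < r" using e s by simp
  moreover have "\<forall>x\<in>topspace X. \<forall>y\<in>topspace X. d x y \<le> max (e x y) s \<and> e x y \<le> max (d x y) s"
  proof (intro ballI)
    fix x y assume "x \<in> topspace X" "y \<in> topspace X"
    with e(3) s have "ereal (d x y) \<le> ereal (max (e x y) s) \<and> ereal (e x y) \<le> ereal (max (d x y) s)"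
      by (simp del: ereal_max add: emax)
    then show "d x y \<le> max (e x y) s \<and> e x y \<le> max (d x y) s" by (simp del: ereal_max)
  qed
  ultimately show ?thesis using s by blast
qed

lemma UD_le:
  assumes "s \<in> S" "\<forall>x\<in>topspace X. \<forall>y\<in>topspace X. d x y \<le> max (e x y) s \<and> e x y \<le> max (d x y) s"
  shows "UD X S d e \<le> ereal s"
  unfolding UD_def
  by (rule Inf_lower) (use assms in \<open>auto simp del: ereal_max simp add: emax\<close>)

lemma finite_PA: "finite A \<Longrightarrow> finite {d x y | x y. x \<in> A \<and> y \<in> A \<and> P x y}"
proof -
  assume "finite A"
  have "{d x y | x y. x \<in> A \<and> y \<in> A \<and> P x y} \<subseteq> (\<lambda>(x,y). d x y) ` (A \<times> A)" by auto
  then show ?thesis using \<open>finite A\<close> finite_subset by blast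
qed

lemma finite_PA2: "finite A \<Longrightarrow> finite {d x y | x y. x \<in> A \<and> y \<in> A}"
  using finite_PA[of A d "\<lambda>_ _. True"] by simp

lemma le_diam: "finite A \<Longrightarrow> x \<in> A \<Longrightarrow> y \<in> A \<Longrightarrow> d x y \<le> diam_d d A"
  unfolding diam_d_def
  apply (rule cSup_upper)
   apply blast
  by (simp add: bdd_above_finite finite_PA2)

lemma sep_le: "finite A \<Longrightarrow> x \<in> A \<Longrightarrow> y \<in> A \<Longrightarrow> x \<noteq> y \<Longrightarrow> sep_d d A \<le> d x y"
  unfolding sep_d_def
  apply (rule cInf_lower)
   apply blast
  by (simp add: bdd_below_finite finite_PA)

lemma sep_pos:
  assumes "finite A" "x \<in> A" "y \<in> A" "x \<noteq> y" "\<And>x y. x \<in> A \<Longrightarrow> y \<in> A \<Longrightarrow> x \<noteq> y \<Longrightarrow> d x y > 0"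
  shows "sep_d d A > 0"
proof -
  let ?Q = "{d x y | x y. x \<in> A \<and> y \<in> A \<and> x \<noteq> y}"
  have f: "finite ?Q" using finite_PA[of A d "\<lambda>x y. x \<noteq> y"] assms(1) by simp
  have ne: "?Q \<noteq> {}" using assms by blast
  have "sep_d d A = Min ?Q" unfolding sep_d_def using cInf_eq_Min[OF f ne] .
  moreover obtain a b where "Min ?Q = d a b" "a\<in>A" "b\<in>A" "a\<noteq>b" using Min_in[OF f ne] by blast
  then have "Min ?Q > 0" using assms(5) by simp
  ultimately show ?thesis by simp
qed

lemma sep_le_diam: "finite A \<Longrightarrow> x \<in> A \<Longrightarrow> y \<in> A \<Longrightarrow> x \<noteq> y \<Longrightarrow> sep_d d A \<le> diam_d d A"
  using sep_le[of A x y d] le_diam[of A x y d] by linarith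

lemma card2_obtain: "2 \<le> card A \<Longrightarrow> \<exists>x y. x \<in> A \<and> y \<in> A \<and> x \<noteq> y"
proof (rule ccontr)
  assume a: "2 \<le> card A" "\<not> (\<exists>x y. x \<in> A \<and> y \<in> A \<and> x \<noteq> y)"
  have f: "finite A" using a(1) card.infinite by (cases "finite A") auto
  have "card A \<le> Suc 0" using card_le_Suc0_iff_eq[OF f] a(2) by simp
  then show False using a(1) by simp
qed

lemma sep_mono: assumes "finite A" "B \<subseteq> A" "x \<in> B" "y \<in> B" "x \<noteq> y"
  shows "sep_d d A \<le> sep_d d B"
  unfolding sep_d_def
proof (rule cInf_mono)
  show "{d x y |x y. x \<in> B \<and> y \<in> B \<and> x \<noteq> y} \<noteq> {}" using assms by blast
  show "bdd_below {d x y |x y. x \<in> A \<and> y \<in> A \<and> x \<noteq> y}"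
    using assms(1) by (simp add: bdd_below_finite finite_PA)
  show "\<And>b. b \<in> {d x y |x y. x \<in> B \<and> y \<in> B \<and> x \<noteq> y} \<Longrightarrow> \<exists>a\<in>{d x y |x y. x \<in> A \<and> y \<in> A \<and> x \<noteq> y}. a \<le> b"
    using assms(2) by blast
qed

lemma diam_mono: assumes "finite A" "B \<subseteq> A" "x \<in> B"
  shows "diam_d d B \<le> diam_d d A"
  unfolding diam_d_def
proof (rule cSup_mono)
  show "{d x y |x y. x \<in> B \<and> y \<in> B} \<noteq> {}" using assms by blast
  show "bdd_above {d x y |x y. x \<in> A \<and> y \<in> A}"
    using assms(1) by (simp add: bdd_above_finite finite_PA2)
  show "\<And>b. b \<in> {d x y |x y. x \<in> B \<and> y \<in> B} \<Longrightarrow> \<exists>a\<in>{d x y |x y. x \<in> A \<and> y \<in> A}. b \<le> a"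
    using assms(2) by blast
qed

lemma ratio_ge1:
  assumes "finite A" "x \<in> A" "y \<in> A" "x \<noteq> y" "\<And>x y. x \<in> A \<Longrightarrow> y \<in> A \<Longrightarrow> x \<noteq> y \<Longrightarrow> d x y > 0"
  shows "1 \<le> diam_d d A / sep_d d A"
  using sep_pos[OF assms] sep_le_diam[OF assms(1-4)] by simp



lemma Ult_ms: "d \<in> Ult X S \<Longrightarrow> Metric_space (topspace X) d"
  unfolding Ult_def ultrametric_on_def by auto

lemma ms_pos: "Metric_space M d \<Longrightarrow> x \<in> M \<Longrightarrow> y \<in> M \<Longrightarrow> x \<noteq> y \<Longrightarrow> d x y > 0"
  using Metric_space.zero Metric_space.nonneg by (metis less_eq_real_def)

definition Dbc :: "'a topology \<Rightarrow> real set \<Rightarrow> nat \<Rightarrow> nat \<Rightarrow> ('a\<Rightarrow>'a\<Rightarrow>real) set" where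
 "Dbc X S b c = {d \<in> Ult X S. \<forall>A. A \<subseteq> topspace X \<longrightarrow> finite A \<longrightarrow> 2 \<le> card A \<longrightarrow>
     real (card A) \<le> real (Suc c) * (diam_d d A / sep_d d A) powr real (Suc b)}"

lemma set_eq_on:
  assumes "\<And>x y. x \<in> A \<Longrightarrow> y \<in> A \<Longrightarrow> e x y = d x y"
  shows "{e x y |x y. x \<in> A \<and> y \<in> A} = {d x y |x y. x \<in> A \<and> y \<in> A}"
    "{e x y |x y. x \<in> A \<and> y \<in> A \<and> x \<noteq> y} = {d x y |x y. x \<in> A \<and> y \<in> A \<and> x \<noteq> y}"
proof -
  show "{e x y |x y. x \<in> A \<and> y \<in> A} = {d x y |x y. x \<in> A \<and> y \<in> A}"
  proof (rule Collect_cong)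
    fix z show "(\<exists>x y. z = e x y \<and> x \<in> A \<and> y \<in> A) = (\<exists>x y. z = d x y \<and> x \<in> A \<and> y \<in> A)"
      using assms by metis
  qed
  show "{e x y |x y. x \<in> A \<and> y \<in> A \<and> x \<noteq> y} = {d x y |x y. x \<in> A \<and> y \<in> A \<and> x \<noteq> y}"
  proof (rule Collect_cong)
    fix z show "(\<exists>x y. z = e x y \<and> x \<in> A \<and> y \<in> A \<and> x \<noteq> y) = (\<exists>x y. z = d x y \<and> x \<in> A \<and> y \<in> A \<and> x \<noteq> y)"
      using assms by metis
  qed
qed

lemma Dbc_closed: "closedin (ud_topology X S) (Dbc X S b c)"
proof -
  have "openin (ud_topology X S) (Ult X S - Dbc X S b c)"
    unfolding openin_ud ud_open_def
  proof (intro conjI ballI)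
    show "Ult X S - Dbc X S b c \<subseteq> Ult X S" by blast
    fix d assume d: "d \<in> Ult X S - Dbc X S b c"
    then obtain A where A: "A \<subseteq> topspace X" "finite A" "2 \<le> card A"
      "\<not> real (card A) \<le> real (Suc c) * (diam_d d A / sep_d d A) powr real (Suc b)"
      unfolding Dbc_def by auto
    have ms: "Metric_space (topspace X) d" using d Ult_ms by blast
    obtain x y where xy: "x\<in>A" "y\<in>A" "x\<noteq>y" using card2_obtain[OF A(3)] by blast
    have pos: "\<And>x y. x\<in>A \<Longrightarrow> y\<in>A \<Longrightarrow> x\<noteq>y \<Longrightarrow> d x y > 0"
      using ms_pos[OF ms] A(1) by blast
    have r: "sep_d d A > 0" using sep_pos[OF A(2) xy pos] .
    show "\<exists>r>0. {e \<in> Ult X S. UD X S d e < ereal r} \<subseteq> Ult X S - Dbc X S b c"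
    proof (intro exI conjI subsetI)
      show "sep_d d A > 0" by (rule r)
      fix e assume e: "e \<in> {e \<in> Ult X S. UD X S d e < ereal (sep_d d A)}"
      then obtain s where s: "s < sep_d d A"
        "\<forall>x\<in>topspace X. \<forall>y\<in>topspace X. d x y \<le> max (e x y) s \<and> e x y \<le> max (d x y) s"
        using UD_lt by blast
      have mse: "Metric_space (topspace X) e" using e Ult_ms by blast
      have eq: "e x y = d x y" if "x\<in>A" "y\<in>A" for x y
      proof cases
        assume "x = y"
        have "y \<in> topspace X" using that A(1) by blast
        then show ?thesis using Metric_space.zero[OF ms, of y y] Metric_space.zero[OF mse, of y y] \<open>x = y\<close> by simp
      next
        assume "x\<noteq>y"
        then have "d x y \<ge> sep_d d A" using sep_le[OF A(2) that] by simp
        with s have "d x y > s" by simp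
        moreover have "d x y \<le> max (e x y) s \<and> e x y \<le> max (d x y) s" using s(2) A(1) that by blast
        ultimately show ?thesis by (simp add: max_def split: if_splits)
      qed
      have "diam_d e A = diam_d d A" "sep_d e A = sep_d d A"
        unfolding diam_d_def sep_d_def using set_eq_on[of A e d] eq by simp_all
      then show "e \<in> Ult X S - Dbc X S b c" using e A unfolding Dbc_def by auto
    qed
  qed
  moreover have "Dbc X S b c \<subseteq> topspace (ud_topology X S)" unfolding topspace_ud Dbc_def by auto
  ultimately show ?thesis unfolding closedin_def topspace_ud by auto
qed

lemma D_eq: "{d \<in> Ult X S. doubling_on (topspace X) d} = (\<Union>(b,c)\<in>UNIV. Dbc X S b c)"
proof (intro set_eqI iffI)
  fix d assume "d \<in> {d \<in> Ult X S. doubling_on (topspace X) d}"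
  then have d: "d \<in> Ult X S" "doubling_on (topspace X) d" by auto
  then obtain \<beta> C where bC: "0 < \<beta>" "1 \<le> C" "\<forall>A. A \<subseteq> topspace X \<longrightarrow> finite A \<longrightarrow> 2 \<le> card A \<longrightarrow>
        real (card A) \<le> C * (diam_d d A / sep_d d A) powr \<beta>" unfolding doubling_on_def by blast
  have ms: "Metric_space (topspace X) d" using d Ult_ms by blast
  define b where "b = nat \<lceil>\<beta>\<rceil>"
  define c where "c = nat \<lceil>C\<rceil>"
  have hb: "\<beta> \<le> real (Suc b)" unfolding b_def by linarith
  have hc: "C \<le> real (Suc c)" unfolding c_def by linarith
  have "d \<in> Dbc X S b c" unfolding Dbc_def
  proof (intro CollectI conjI allI impI)
    show "d \<in> Ult X S" by (rule d)
    fix A assume A: "A \<subseteq> topspace X" "finite A" "2 \<le> card A"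
    obtain x y where xy: "x\<in>A" "y\<in>A" "x\<noteq>y" using card2_obtain[OF A(3)] by blast
    have pos: "\<And>x y. x\<in>A \<Longrightarrow> y\<in>A \<Longrightarrow> x\<noteq>y \<Longrightarrow> d x y > 0"
      using ms_pos[OF ms] A(1) by blast
    define q where "q = diam_d d A / sep_d d A"
    have q1: "1 \<le> q" unfolding q_def by (rule ratio_ge1[OF A(2) xy pos])
    have "q powr \<beta> \<le> q powr real (Suc b)" using powr_mono[OF hb q1] .
    moreover have "0 \<le> q powr \<beta>" by simp
    ultimately have "C * q powr \<beta> \<le> real (Suc c) * q powr real (Suc b)"
      using hc bC(2) by (intro mult_mono) auto
    moreover have "real (card A) \<le> C * q powr \<beta>" using bC(3) A unfolding q_def by blast
    ultimately show "real (card A) \<le> real (Suc c) * (diam_d d A / sep_d d A) powr real (Suc b)"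
      unfolding q_def by linarith
  qed
  then show "d \<in> (\<Union>(b,c)\<in>UNIV. Dbc X S b c)" by blast
next
  fix d assume "d \<in> (\<Union>(b,c)\<in>UNIV. Dbc X S b c)"
  then obtain b c where "d \<in> Dbc X S b c" by blast
  then have H: "d \<in> Ult X S" "\<forall>A. A \<subseteq> topspace X \<longrightarrow> finite A \<longrightarrow> 2 \<le> card A \<longrightarrow>
     real (card A) \<le> real (Suc c) * (diam_d d A / sep_d d A) powr real (Suc b)" unfolding Dbc_def by auto
  have "0 < real (Suc b)" "1 \<le> real (Suc c)" by auto
  then have "doubling_on (topspace X) d" unfolding doubling_on_def using H(2) by blast
  then show "d \<in> {d \<in> Ult X S. doubling_on (topspace X) d}" using H(1) by blast
qed

lemma D_fsigma: "fsigma_in (ud_topology X S) {d \<in> Ult X S. doubling_on (topspace X) d}"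
  unfolding fsigma_in_def union_of_def D_eq
proof (intro exI conjI)
  show "countable ((\<lambda>(b,c). Dbc X S b c) ` UNIV)" by simp
  show "(\<lambda>(b,c). Dbc X S b c) ` UNIV \<subseteq> Collect (closedin (ud_topology X S))"
    using Dbc_closed by auto
qed simp



definition decz :: "(nat \<Rightarrow> real) \<Rightarrow> bool" where
  "decz \<sigma> \<longleftrightarrow> (\<forall>n. \<sigma> (Suc n) < \<sigma> n) \<and> \<sigma> \<longlonglongrightarrow> 0"

lemma decz_less: "decz \<sigma> \<Longrightarrow> n < m \<Longrightarrow> \<sigma> m < \<sigma> n"
  using lift_Suc_mono_less[of "\<lambda>n. - \<sigma> n"] unfolding decz_def by force

lemma decz_le: "decz \<sigma> \<Longrightarrow> n \<le> m \<Longrightarrow> \<sigma> m \<le> \<sigma> n"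
  using decz_less[of \<sigma> n m] by (cases "n = m") auto

lemma decz_pos: "decz \<sigma> \<Longrightarrow> \<sigma> n > 0"
proof (rule ccontr)
  assume d: "decz \<sigma>" and "\<not> \<sigma> n > 0"
  then have "\<sigma> (Suc n) < 0" using d unfolding decz_def by (meson leI le_less_trans)
  then have "\<forall>m\<ge>Suc n. \<sigma> m \<le> \<sigma> (Suc n)" using decz_le[OF d] by blast
  moreover have "\<exists>no. \<forall>m\<ge>no. norm (\<sigma> m - 0) < - \<sigma> (Suc n)"
    using d \<open>\<sigma> (Suc n) < 0\<close> unfolding decz_def LIMSEQ_iff by auto
  then obtain no where "\<forall>m\<ge>no. norm (\<sigma> m) < - \<sigma> (Suc n)" by auto
  ultimately have "norm (\<sigma> (max no (Suc n))) < - \<sigma> (Suc n)" "\<sigma> (max no (Suc n)) \<le> \<sigma> (Suc n)" by auto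
  then show False by simp
qed

lemma decz_ex: "decz \<sigma> \<Longrightarrow> t > 0 \<Longrightarrow> \<exists>n. \<sigma> n < t"
proof -
  assume d: "decz \<sigma>" "t > 0"
  then obtain no where "\<forall>m\<ge>no. norm (\<sigma> m - 0) < t" unfolding decz_def LIMSEQ_iff by blast
  then have "\<bar>\<sigma> no\<bar> < t" by auto
  then show ?thesis by (auto simp: abs_less_iff)
qed

definition rnd :: "(nat \<Rightarrow> real) \<Rightarrow> real \<Rightarrow> real" where
  "rnd \<sigma> t = (if t \<le> 0 then 0 else \<sigma> (LEAST n. \<sigma> n < t))"

lemma rnd_pos: "decz \<sigma> \<Longrightarrow> t > 0 \<Longrightarrow> rnd \<sigma> t > 0"
  unfolding rnd_def using decz_pos by auto

lemma rnd_nonneg: "decz \<sigma> \<Longrightarrow> rnd \<sigma> t \<ge> 0"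
  unfolding rnd_def using decz_pos less_imp_le by auto

lemma rnd_le_t: "decz \<sigma> \<Longrightarrow> t \<ge> 0 \<Longrightarrow> rnd \<sigma> t \<le> t"
proof -
  assume d: "decz \<sigma>" "t \<ge> 0"
  show ?thesis
  proof (cases "t \<le> 0")
    case False
    then have "\<exists>n. \<sigma> n < t" using decz_ex[OF d(1)] by simp
    then have "\<sigma> (LEAST n. \<sigma> n < t) < t" by (rule LeastI_ex)
    then show ?thesis unfolding rnd_def using False by simp
  qed (use d in \<open>simp add: rnd_def\<close>)
qed

lemma rnd_le0: "decz \<sigma> \<Longrightarrow> rnd \<sigma> t \<le> \<sigma> 0"
  unfolding rnd_def using decz_le[of \<sigma> 0] decz_pos[of \<sigma> 0] by auto

lemma rnd_in: "decz \<sigma> \<Longrightarrow> (\<forall>n. \<sigma> n \<in> S) \<Longrightarrow> 0 \<in> S \<Longrightarrow> rnd \<sigma> t \<in> S"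
  unfolding rnd_def by auto

lemma rnd_mono: "decz \<sigma> \<Longrightarrow> t \<le> t' \<Longrightarrow> rnd \<sigma> t \<le> rnd \<sigma> t'"
proof -
  assume d: "decz \<sigma>" "t \<le> t'"
  show ?thesis
  proof (cases "t \<le> 0")
    case True then show ?thesis using rnd_nonneg[OF d(1)] unfolding rnd_def by simp
  next
    case False
    then have ex: "\<exists>n. \<sigma> n < t" using decz_ex[OF d(1)] by simp
    have "\<sigma> (LEAST n. \<sigma> n < t) < t'" using LeastI_ex[OF ex] d(2) by simp
    then have "(LEAST n. \<sigma> n < t') \<le> (LEAST n. \<sigma> n < t)" by (rule Least_le)
    then have "\<sigma> (LEAST n. \<sigma> n < t) \<le> \<sigma> (LEAST n. \<sigma> n < t')" by (rule decz_le[OF d(1)])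
    then show ?thesis unfolding rnd_def using False d(2) by simp
  qed
qed

lemma rnd_small: "decz \<sigma> \<Longrightarrow> t \<ge> 0 \<Longrightarrow> rnd \<sigma> t < \<sigma> n \<Longrightarrow> t \<le> \<sigma> n"
proof (rule ccontr)
  assume d: "decz \<sigma>" "t \<ge> 0" "rnd \<sigma> t < \<sigma> n" "\<not> t \<le> \<sigma> n"
  then have "t > 0" using decz_pos[of \<sigma> n] by simp
  have "(LEAST n. \<sigma> n < t) \<le> n" using d(4) by (intro Least_le) simp
  then have "\<sigma> n \<le> rnd \<sigma> t" unfolding rnd_def using \<open>t > 0\<close> decz_le[OF d(1)] by simp
  then show False using d(3) by simp
qed

lemma rnd_max: assumes "decz \<sigma>" shows "rnd \<sigma> (max a b) = max (rnd \<sigma> a) (rnd \<sigma> b)"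
proof (cases "a \<le> b")
  case True then show ?thesis using rnd_mono[of \<sigma> a b] assms by (simp add: max_def)
next
  case False then have "b \<le> a" by simp
  then show ?thesis using False rnd_mono[of \<sigma> b a] assms by (simp add: max_def)
qed

lemma ultra_ball_nest:
  assumes u: "ultrametric_on M d" and w: "w \<in> Metric_space.mball M d a r" "w \<in> Metric_space.mball M d b q"
    and rq: "r \<le> q"
  shows "Metric_space.mball M d a r \<subseteq> Metric_space.mball M d b q"
proof
  have ms: "Metric_space M d" and ul: "\<forall>x\<in>M. \<forall>y\<in>M. \<forall>z\<in>M. d x y \<le> max (d x z) (d z y)"
    using u unfolding ultrametric_on_def by auto
  fix y assume y: "y \<in> Metric_space.mball M d a r"
  have wa: "w \<in> M" "a \<in> M" "b \<in> M" "d a w < r" "d b w < q" using w Metric_space.in_mball[OF ms] by auto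
  have ya: "y \<in> M" "d a y < r" using y Metric_space.in_mball[OF ms] by auto
  have "d w y \<le> max (d w a) (d a y)" using ul wa ya by blast
  moreover have "d w a = d a w" using Metric_space.commute[OF ms] by blast
  ultimately have "d w y < r" using wa ya by simp
  moreover have "d b y \<le> max (d b w) (d w y)" using ul wa ya by blast
  ultimately have "d b y < q" using wa rq by simp
  then show "y \<in> Metric_space.mball M d b q" using Metric_space.in_mball[OF ms] wa ya by auto
qed

lemma mtop_eq:
  assumes m1: "Metric_space M d1" and m2: "Metric_space M d2"
    and h1: "\<And>x r. x \<in> M \<Longrightarrow> r > 0 \<Longrightarrow> \<exists>r'>0. \<forall>y\<in>M. d2 x y < r' \<longrightarrow> d1 x y < r"
    and h2: "\<And>x r. x \<in> M \<Longrightarrow> r > 0 \<Longrightarrow> \<exists>r'>0. \<forall>y\<in>M. d1 x y < r' \<longrightarrow> d2 x y < r"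
  shows "Metric_space.mtopology M d1 = Metric_space.mtopology M d2"
  unfolding topology_eq
proof (intro allI iffI)
  fix U assume U: "openin (Metric_space.mtopology M d1) U"
  show "openin (Metric_space.mtopology M d2) U"
    unfolding Metric_space.openin_mtopology[OF m2]
  proof (intro conjI allI impI)
    show "U \<subseteq> M" using U Metric_space.openin_mtopology[OF m1] by blast
    fix x assume "x \<in> U"
    then obtain r where r: "r > 0" "Metric_space.mball M d1 x r \<subseteq> U" "x \<in> M"
      using U Metric_space.openin_mtopology[OF m1] by blast
    obtain r' where "r' > 0" "\<forall>y\<in>M. d2 x y < r' \<longrightarrow> d1 x y < r" using h1[OF r(3) r(1)] by blast
    then have "Metric_space.mball M d2 x r' \<subseteq> U"
      using r Metric_space.in_mball[OF m1] Metric_space.in_mball[OF m2] by blast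
    then show "\<exists>r>0. Metric_space.mball M d2 x r \<subseteq> U" using \<open>r' > 0\<close> by blast
  qed
next
  fix U assume U: "openin (Metric_space.mtopology M d2) U"
  show "openin (Metric_space.mtopology M d1) U"
    unfolding Metric_space.openin_mtopology[OF m1]
  proof (intro conjI allI impI)
    show "U \<subseteq> M" using U Metric_space.openin_mtopology[OF m2] by blast
    fix x assume "x \<in> U"
    then obtain r where r: "r > 0" "Metric_space.mball M d2 x r \<subseteq> U" "x \<in> M"
      using U Metric_space.openin_mtopology[OF m2] by blast
    obtain r' where "r' > 0" "\<forall>y\<in>M. d1 x y < r' \<longrightarrow> d2 x y < r" using h2[OF r(3) r(1)] by blast
    then have "Metric_space.mball M d1 x r' \<subseteq> U"
      using r Metric_space.in_mball[OF m1] Metric_space.in_mball[OF m2] by blast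
    then show "\<exists>r>0. Metric_space.mball M d1 x r \<subseteq> U" using \<open>r' > 0\<close> by blast
  qed
qed

lemma ultra_metric_intro:
  assumes "\<And>x y. 0 \<le> d x y" "\<And>x y. d x y = d y x" "\<And>x y. x \<in> M \<Longrightarrow> y \<in> M \<Longrightarrow> d x y = 0 \<longleftrightarrow> x = y"
    "\<And>x y z. x \<in> M \<Longrightarrow> y \<in> M \<Longrightarrow> z \<in> M \<Longrightarrow> d x y \<le> max (d x z) (d z y)"
  shows "ultrametric_on M d"
  unfolding ultrametric_on_def
proof (intro conjI ballI)
  show "Metric_space M d"
  proof
    fix x y z assume "x \<in> M" "y \<in> M" "z \<in> M"
    then have "d x z \<le> max (d x y) (d y z)" using assms(4) by blast
    then show "d x z \<le> d x y + d y z" using assms(1)[of x y] assms(1)[of y z] by linarith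
  qed (use assms in auto)
qed (use assms in auto)



lemma noncompact_part:
  fixes X :: "'a topology"
  assumes rs: "range_set S" and cc: "countable_coinitiality S" and um: "ultrametrizable_space X"
    and nc: "\<not> compact_space X"
  shows "(ud_topology X S) closure_of {d \<in> Ult X S. doubling_on (topspace X) d} \<noteq> topspace (ud_topology X S)"
proof -
  define M where "M = topspace X"
  obtain \<sigma> where \<sigma>S: "\<forall>n. \<sigma> n \<in> S" and dz: "decz \<sigma>"
    using cc unfolding countable_coinitiality_def decz_def by blast
  have S0: "0 \<in> S" using rs unfolding range_set_def by simp
  have c0: "\<sigma> 0 > 0" using decz_pos[OF dz] .
  obtain d0 where u0: "ultrametric_on M d0" and top0: "Metric_space.mtopology M d0 = X"
    using um unfolding ultrametrizable_space_def M_def by blast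
  have ms0: "Metric_space M d0" and ul0: "\<forall>x\<in>M. \<forall>y\<in>M. \<forall>z\<in>M. d0 x y \<le> max (d0 x z) (d0 z y)"
    using u0 unfolding ultrametric_on_def by auto
  interpret m0: Metric_space M d0 by (rule ms0)
  have "\<not> compact_space m0.mtopology" using nc top0 by simp
  then obtain T where T: "T \<subseteq> M" "infinite T" "m0.mtopology derived_set_of T \<noteq> {} \<Longrightarrow> False"
    unfolding m0.compact_space_eq_Bolzano_Weierstrass by blast
  obtain x :: "nat \<Rightarrow> 'a" where x: "inj x" "range x \<subseteq> T" using infinite_countable_subset[OF T(2)] by blast
  have xM: "x n \<in> M" for n using x T by blast
  have nd: "m0.mtopology derived_set_of (range x) = {}"
    using derived_set_of_mono[OF x(2), of m0.mtopology] T(3) by blast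
  have iso: "\<exists>\<rho>>0. \<forall>n. x n \<in> m0.mball z \<rho> \<longrightarrow> x n = z" if z: "z \<in> M" for z
  proof -
    have "z \<notin> m0.mtopology derived_set_of (range x)" using nd by blast
    then obtain U where U: "z \<in> U" "openin m0.mtopology U" "\<forall>y. y \<noteq> z \<longrightarrow> y \<in> range x \<longrightarrow> y \<notin> U"
      unfolding in_derived_set_of using z by auto
    then obtain \<rho> where "\<rho> > 0" "m0.mball z \<rho> \<subseteq> U" using m0.openin_mtopology by blast
    then show ?thesis using U(3) by blast
  qed
  have "\<exists>r. r > 0 \<and> (\<forall>m. x m \<in> m0.mball (x n) r \<longrightarrow> m = n)" for n
  proof -
    obtain \<rho> where "\<rho> > 0" "\<forall>m. x m \<in> m0.mball (x n) \<rho> \<longrightarrow> x m = x n" using iso[OF xM] by blast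
    then show ?thesis using x(1) unfolding inj_def by blast
  qed
  then obtain r where r: "\<And>n. r n > 0" "\<And>n m. x m \<in> m0.mball (x n) (r n) \<Longrightarrow> m = n" by metis
  define B where "B n = m0.mball (x n) (r n)" for n
  have xB: "x n \<in> B n" for n using r(1) xM unfolding B_def by simp
  have disj: "B n \<inter> B m = {}" if "n \<noteq> m" for n m
  proof (rule ccontr)
    assume "B n \<inter> B m \<noteq> {}"
    then obtain w where w: "w \<in> m0.mball (x n) (r n)" "w \<in> m0.mball (x m) (r m)" unfolding B_def by blast
    show False
    proof (cases "r n \<le> r m")
      case True
      then have "B n \<subseteq> B m" using ultra_ball_nest[OF u0 w True] unfolding B_def by blast
      then have "x n \<in> B m" using xB by blast
      then show False using r(2) that unfolding B_def by blast
    next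
      case False
      then have "r m \<le> r n" by simp
      then have "B m \<subseteq> B n" using ultra_ball_nest[OF u0 w(2) w(1)] unfolding B_def by blast
      then have "x m \<in> B n" using xB by blast
      then show False using r(2) that unfolding B_def by blast
    qed
  qed
  define same where "same z w \<longleftrightarrow> (\<forall>n. z \<in> B n \<longleftrightarrow> w \<in> B n)" for z w
  have same_refl: "same z z" for z unfolding same_def by blast
  have same_sym: "same z w \<Longrightarrow> same w z" for z w unfolding same_def by blast
  have same_trans: "same z w \<Longrightarrow> same w v \<Longrightarrow> same z v" for z w v unfolding same_def by blast
  have loc: "\<exists>\<delta>>0. \<forall>y\<in>M. d0 z y < \<delta> \<longrightarrow> same z y" if z: "z \<in> M" for z
  proof (cases "\<exists>n. z \<in> B n")
    case True
    then obtain n where n: "z \<in> B n" by blast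
    have "openin m0.mtopology (B n)" unfolding B_def by simp
    then obtain \<delta> where \<delta>: "\<delta> > 0" "m0.mball z \<delta> \<subseteq> B n" using n m0.openin_mtopology by blast
    have "same z y" if "y \<in> M" "d0 z y < \<delta>" for y
    proof -
      have yn: "y \<in> B n" using \<delta> that z by auto
      show ?thesis unfolding same_def
      proof
        fix m show "z \<in> B m \<longleftrightarrow> y \<in> B m"
        proof (cases "m = n")
          case True then show ?thesis using n yn by simp
        next
          case False
          have "B m \<inter> B n = {}" using disj[OF False] .
          then show ?thesis using n yn by blast
        qed
      qed
    qed
    then show ?thesis using \<delta>(1) by blast
  next
    case False
    obtain \<rho> where \<rho>: "\<rho> > 0" "\<forall>n. x n \<in> m0.mball z \<rho> \<longrightarrow> x n = z" using iso[OF z] by blast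
    have notB: "y \<notin> B n" if "y \<in> M" "d0 z y < \<rho>" for y n
    proof
      assume yB: "y \<in> B n"
      have yb: "y \<in> m0.mball z \<rho>" using that z by simp
      have yB': "y \<in> m0.mball (x n) (r n)" using yB unfolding B_def .
      show False
      proof (cases "\<rho> \<le> r n")
        case True
        then have "m0.mball z \<rho> \<subseteq> B n" using ultra_ball_nest[OF u0 yb yB' True] unfolding B_def by blast
        then show False using False z \<rho>(1) by auto
      next
        case c: False
        then have "r n \<le> \<rho>" by simp
        then have "B n \<subseteq> m0.mball z \<rho>" using ultra_ball_nest[OF u0 yB' yb] unfolding B_def by blast
        then have "x n = z" using xB \<rho>(2) by blast
        then show False using False xB by blast
      qed
    qed
    have "same z y" if "y \<in> M" "d0 z y < \<rho>" for y
      using False notB[OF that] unfolding same_def by blast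
    then show ?thesis using \<rho>(1) by blast
  qed
  define e where "e z w = (if z \<in> M \<and> w \<in> M then (if same z w then rnd \<sigma> (d0 z w) else \<sigma> 0) else 0)" for z w
  have e_nonneg: "0 \<le> e z w" for z w unfolding e_def using rnd_nonneg[OF dz] c0 by auto
  have e_comm: "e z w = e w z" for z w
  proof -
    have ss: "same z w \<longleftrightarrow> same w z" using same_sym by blast
    show ?thesis unfolding e_def ss m0.commute[of z w] by (simp add: conj_commute)
  qed
  have e_zero: "e z w = 0 \<longleftrightarrow> z = w" if "z \<in> M" "w \<in> M" for z w
  proof (cases "z = w")
    case True then show ?thesis using that same_refl unfolding e_def rnd_def by simp
  next
    case False
    then have "d0 z w > 0" using ms_pos[OF ms0 that] by simp
    then have "rnd \<sigma> (d0 z w) > 0" using rnd_pos[OF dz] by blast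
    then show ?thesis unfolding e_def using that False c0 by auto
  qed
  have e_ultra: "e z w \<le> max (e z v) (e v w)" if "z \<in> M" "w \<in> M" "v \<in> M" for z w v
  proof (cases "same z v \<and> same v w")
    case True
    then have sw: "same z w" using same_trans by blast
    have "rnd \<sigma> (d0 z w) \<le> rnd \<sigma> (max (d0 z v) (d0 v w))" using ul0 that by (intro rnd_mono[OF dz]) blast
    then show ?thesis unfolding e_def using that True sw rnd_max[OF dz] by simp
  next
    case False
    then have "max (e z v) (e v w) = \<sigma> 0"
      unfolding e_def using that rnd_le0[OF dz] by (auto simp: max_def intro: antisym)
    moreover have "e z w \<le> \<sigma> 0" unfolding e_def using rnd_le0[OF dz] c0 by auto
    ultimately show ?thesis by simp
  qed
  have ue: "ultrametric_on M e" by (rule ultra_metric_intro) (use e_nonneg e_comm e_zero e_ultra in auto)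
  then have mse: "Metric_space M e" unfolding ultrametric_on_def by simp
  have tope: "Metric_space.mtopology M e = Metric_space.mtopology M d0"
  proof (rule mtop_eq[OF mse ms0])
    fix z \<rho> assume z: "z \<in> M" and \<rho>: "(\<rho>::real) > 0"
    obtain \<delta> where \<delta>: "\<delta> > 0" "\<forall>y\<in>M. d0 z y < \<delta> \<longrightarrow> same z y" using loc[OF z] by blast
    have "\<forall>y\<in>M. d0 z y < min \<delta> \<rho> \<longrightarrow> e z y < \<rho>"
    proof (intro ballI impI)
      fix y assume y: "y \<in> M" "d0 z y < min \<delta> \<rho>"
      then have "same z y" using \<delta> by auto
      then have "e z y = rnd \<sigma> (d0 z y)" unfolding e_def using z y by simp
      also have "\<dots> \<le> d0 z y" using rnd_le_t[OF dz] by simp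
      finally show "e z y < \<rho>" using y by simp
    qed
    then show "\<exists>r'>0. \<forall>y\<in>M. d0 z y < r' \<longrightarrow> e z y < \<rho>" using \<delta>(1) \<rho> by (intro exI[of _ "min \<delta> \<rho>"]) auto
  next
    fix z \<rho> assume z: "z \<in> M" and \<rho>: "(\<rho>::real) > 0"
    obtain n where n: "\<sigma> n < \<rho>" using decz_ex[OF dz \<rho>] by blast
    have "\<forall>y\<in>M. e z y < \<sigma> n \<longrightarrow> d0 z y < \<rho>"
    proof (intro ballI impI)
      fix y assume y: "y \<in> M" "e z y < \<sigma> n"
      have "same z y"
      proof (rule ccontr)
        assume "\<not> same z y"
        then have "e z y = \<sigma> 0" unfolding e_def using z y by simp
        then show False using y decz_le[OF dz, of 0 n] by simp
      qed
      then have "rnd \<sigma> (d0 z y) < \<sigma> n" using y z unfolding e_def by simp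
      then have "d0 z y \<le> \<sigma> n" using rnd_small[OF dz] by simp
      then show "d0 z y < \<rho>" using n by simp
    qed
    then show "\<exists>r'>0. \<forall>y\<in>M. e z y < r' \<longrightarrow> d0 z y < \<rho>" using decz_pos[OF dz, of n] by blast
  qed
  have eUlt: "e \<in> Ult X S"
    unfolding Ult_def
  proof (intro CollectI conjI ballI allI impI)
    show "ultrametric_on (topspace X) e" using ue M_def by simp
    fix z w assume "z \<in> topspace X" "w \<in> topspace X"
    then show "e z w \<in> S" unfolding e_def M_def using rnd_in[OF dz \<sigma>S S0] \<sigma>S by auto
  next
    fix z w assume "z \<notin> topspace X \<or> w \<notin> topspace X"
    then show "e z w = 0" unfolding e_def M_def by auto
  next
    show "Metric_space.mtopology (topspace X) e = X" using tope top0 M_def by simp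
  qed
  have esep: "e (x n) (x m) = \<sigma> 0" if "n \<noteq> m" for n m
  proof -
    have "x m \<notin> B n" using r(2) that unfolding B_def by blast
    then have "\<not> same (x n) (x m)" using xB unfolding same_def by blast
    then show ?thesis unfolding e_def using xM by simp
  qed
  define Ob where "Ob = {d \<in> Ult X S. \<forall>n m. n \<noteq> m \<longrightarrow> d (x n) (x m) = \<sigma> 0}"
  have eO: "e \<in> Ob" unfolding Ob_def using eUlt esep by blast
  have Oopen: "openin (ud_topology X S) Ob"
    unfolding openin_ud ud_open_def
  proof (intro conjI ballI)
    show "Ob \<subseteq> Ult X S" unfolding Ob_def by blast
    fix d assume d: "d \<in> Ob"
    have "{e \<in> Ult X S. UD X S d e < ereal (\<sigma> 0)} \<subseteq> Ob"
    proof
      fix d' assume d': "d' \<in> {e \<in> Ult X S. UD X S d e < ereal (\<sigma> 0)}"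
      then obtain s where s: "s < \<sigma> 0"
        "\<forall>x\<in>topspace X. \<forall>y\<in>topspace X. d x y \<le> max (d' x y) s \<and> d' x y \<le> max (d x y) s"
        using UD_lt by blast
      have "d' (x n) (x m) = \<sigma> 0" if "n \<noteq> m" for n m
      proof -
        have "d (x n) (x m) = \<sigma> 0" using d that unfolding Ob_def by blast
        moreover have "d (x n) (x m) \<le> max (d' (x n) (x m)) s \<and> d' (x n) (x m) \<le> max (d (x n) (x m)) s"
          using s(2) xM M_def by blast
        ultimately show ?thesis using s(1) by (auto simp: max_def split: if_splits)
      qed
      then show "d' \<in> Ob" using d' unfolding Ob_def by blast
    qed
    then show "\<exists>r>0. {e \<in> Ult X S. UD X S d e < ereal r} \<subseteq> Ob" using c0 by blast
  qed
  have OD: "\<not> doubling_on M d" if d: "d \<in> Ob" for d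
  proof
    assume "doubling_on M d"
    then obtain \<beta> C where bC: "0 < \<beta>" "1 \<le> C" "\<forall>A. A \<subseteq> M \<longrightarrow> finite A \<longrightarrow> 2 \<le> card A \<longrightarrow>
        real (card A) \<le> C * (diam_d d A / sep_d d A) powr \<beta>" unfolding doubling_on_def by blast
    have msd: "Metric_space M d" using d Ult_ms unfolding Ob_def M_def by blast
    define N where "N = nat \<lceil>C\<rceil> + 2"
    define A where "A = x ` {..<N}"
    have cA: "card A = N" unfolding A_def using x(1) by (simp add: card_image inj_on_subset)
    have fA: "finite A" unfolding A_def by simp
    have AM: "A \<subseteq> M" unfolding A_def using xM by blast
    have x01: "x 0 \<in> A" "x 1 \<in> A" "x 0 \<noteq> x 1" unfolding A_def N_def using x(1) by (auto simp: inj_def)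
    have vals: "d a b = (if a = b then 0 else \<sigma> 0)" if ab: "a \<in> A" "b \<in> A" for a b
    proof (cases "a = b")
      case True then show ?thesis using Metric_space.zero[OF msd] AM ab by auto
    next
      case False
      obtain i j where ij: "a = x i" "b = x j" using ab unfolding A_def by blast
      then have "i \<noteq> j" using False by blast
      then show ?thesis using False d ij unfolding Ob_def by auto
    qed
    have "diam_d d A \<le> \<sigma> 0" unfolding diam_d_def
      by (rule cSup_least) (use x01 vals c0 in auto)
    moreover have "\<sigma> 0 \<le> diam_d d A" using le_diam[OF fA x01(1,2), of d] vals[OF x01(1,2)] x01(3) by simp
    moreover have "\<sigma> 0 \<le> sep_d d A" unfolding sep_d_def
      by (rule cInf_greatest) (use x01 vals in auto)
    moreover have "sep_d d A \<le> \<sigma> 0" using sep_le[OF fA x01, of d] vals[OF x01(1,2)] x01(3) by simp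
    ultimately have r1: "diam_d d A / sep_d d A = 1" using c0 by simp
    have c2: "2 \<le> card A" using cA unfolding N_def by simp
    have "real (card A) \<le> C * (diam_d d A / sep_d d A) powr \<beta>" using bC(3) AM fA c2 by blast
    then have "real (card A) \<le> C" using r1 by simp
    then show False using cA unfolding N_def by linarith
  qed
  have "e \<notin> (ud_topology X S) closure_of {d \<in> Ult X S. doubling_on (topspace X) d}"
    unfolding in_closure_of using eO Oopen OD M_def by blast
  moreover have "e \<in> topspace (ud_topology X S)" using eUlt topspace_ud by blast
  ultimately show ?thesis by blast
qed



lemma tau_exists:
  assumes dz: "decz \<sigma>" and \<sigma>S: "\<forall>n. \<sigma> n \<in> S" and r: "r > 0"
  shows "\<exists>\<tau>. decz \<tau> \<and> (\<forall>n. \<tau> n \<in> S) \<and> \<tau> 0 < r \<and> (\<forall>k. \<tau> (Suc k) \<le> \<tau> k / 2)"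
proof -
  define g where "g = rec_nat (LEAST n. \<sigma> n < r) (\<lambda>k gk. LEAST n. \<sigma> n \<le> \<sigma> gk / 2)"
  have g0: "g 0 = (LEAST n. \<sigma> n < r)" by (simp add: g_def)
  have gS: "g (Suc k) = (LEAST n. \<sigma> n \<le> \<sigma> (g k) / 2)" for k by (simp add: g_def)
  have ex2: "\<exists>n. \<sigma> n \<le> \<sigma> m / 2" for m
  proof -
    have "\<sigma> m / 2 > 0" using decz_pos[OF dz] by simp
    then obtain n where "\<sigma> n < \<sigma> m / 2" using decz_ex[OF dz] by blast
    then show ?thesis by (intro exI[of _ n]) simp
  qed
  have h0: "\<sigma> (g 0) < r" unfolding g0 using decz_ex[OF dz r] by (rule LeastI_ex)
  have hS: "\<sigma> (g (Suc k)) \<le> \<sigma> (g k) / 2" for k unfolding gS using ex2 by (rule LeastI_ex)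
  have gm: "g k < g (Suc k)" for k
  proof (rule ccontr)
    assume "\<not> g k < g (Suc k)"
    then have "\<sigma> (g k) \<le> \<sigma> (g (Suc k))" using decz_le[OF dz] by simp
    then show False using hS[of k] decz_pos[OF dz, of "g k"] by simp
  qed
  have sm: "strict_mono g" using gm by (rule strict_monoI_Suc)
  define \<tau> where "\<tau> = \<sigma> \<circ> g"
  have "\<tau> \<longlonglongrightarrow> 0" unfolding \<tau>_def using LIMSEQ_subseq_LIMSEQ[OF _ sm] dz unfolding decz_def by blast
  moreover have "\<tau> (Suc k) < \<tau> k" for k unfolding \<tau>_def using hS[of k] decz_pos[OF dz, of "g k"] by simp
  ultimately have "decz \<tau>" unfolding decz_def by blast
  moreover have "\<forall>n. \<tau> n \<in> S" unfolding \<tau>_def using \<sigma>S by simp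
  moreover have "\<tau> 0 < r" unfolding \<tau>_def using h0 by simp
  moreover have "\<forall>k. \<tau> (Suc k) \<le> \<tau> k / 2" unfolding \<tau>_def using hS by simp
  ultimately show ?thesis by blast
qed

lemma tau_ratio:
  assumes "\<forall>k. \<tau> (Suc k) \<le> \<tau> k / (2::real)"
  shows "\<tau> (i + m) * 2 ^ m \<le> \<tau> i"
proof (induction m)
  case 0 then show ?case by simp
next
  case (Suc m)
  have "\<tau> (i + Suc m) * 2 ^ Suc m = (2 * \<tau> (Suc (i + m))) * 2 ^ m" by simp
  also have "\<dots> \<le> \<tau> (i + m) * 2 ^ m"
    using assms by (intro mult_right_mono) (auto simp: field_simps)
  also have "\<dots> \<le> \<tau> i" by (rule Suc.IH)
  finally show ?case .
qed



lemma compact_part: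
  fixes X :: "'a topology"
  assumes rs: "range_set S" and cc: "countable_coinitiality S" and cp: "compact_space X"
    and eU: "e \<in> Ult X S" and r: "r > 0"
  shows "\<exists>d \<in> Ult X S. doubling_on (topspace X) d \<and> UD X S e d < ereal r"
proof -
  define M where "M = topspace X"
  obtain \<sigma> where \<sigma>S: "\<forall>n. \<sigma> n \<in> S" and dz0: "decz \<sigma>"
    using cc unfolding countable_coinitiality_def decz_def by blast
  obtain \<tau> where dz: "decz \<tau>" and \<tau>S: "\<forall>n. \<tau> n \<in> S" and \<tau>r: "\<tau> 0 < r"
    and \<tau>h: "\<forall>k. \<tau> (Suc k) \<le> \<tau> k / 2"
    using tau_exists[OF dz0 \<sigma>S r] by blast
  have S0: "0 \<in> S" using rs unfolding range_set_def by simp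
  define s where "s = \<tau> 0"
  have s0: "s > 0" unfolding s_def using decz_pos[OF dz] .
  have \<tau>s: "\<tau> k \<le> s" for k unfolding s_def using decz_le[OF dz] by simp
  have ue: "ultrametric_on M e" and eS: "\<forall>x\<in>M. \<forall>y\<in>M. e x y \<in> S"
    and tope: "Metric_space.mtopology M e = X"
    using eU unfolding Ult_def M_def by auto
  have mse: "Metric_space M e" and ule: "\<forall>x\<in>M. \<forall>y\<in>M. \<forall>z\<in>M. e x y \<le> max (e x z) (e z y)"
    using ue unfolding ultrametric_on_def by auto
  interpret me: Metric_space M e by (rule mse)
  have tb: "me.mtotally_bounded M"
    using cp tope me.compact_space_eq_mcomplete_mtotally_bounded by simp
  have tb': "\<exists>K. finite K \<and> K \<subseteq> M \<and> M \<subseteq> (\<Union>x\<in>K. me.mball x \<epsilon>)" if "\<epsilon> > 0" for \<epsilon>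
    using tb that unfolding me.mtotally_bounded_def by simp
  have mball_eq: "me.mball z \<rho> = me.mball k \<rho>" if "z \<in> me.mball k \<rho>" for z k \<rho>
  proof -
    have "e k z < \<rho>" "z \<in> M" using that by auto
    then have "0 < \<rho>" using me.nonneg[of k z] by linarith
    then have z: "z \<in> me.mball z \<rho>" using \<open>z \<in> M\<close> by auto
    have "me.mball z \<rho> \<subseteq> me.mball k \<rho>" by (rule ultra_ball_nest[OF ue z that order_refl])
    moreover have "me.mball k \<rho> \<subseteq> me.mball z \<rho>" by (rule ultra_ball_nest[OF ue that z order_refl])
    ultimately show ?thesis by (rule subset_antisym)
  qed
  define Lev where "Lev n = (\<lambda>z. me.mball z (\<tau> n)) ` M" for n
  have finLev: "finite (Lev n)" for n
  proof -
    obtain K where K: "finite K" "K \<subseteq> M" "M \<subseteq> (\<Union>x\<in>K. me.mball x (\<tau> n))"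
      using tb'[OF decz_pos[OF dz, of n]] by (elim exE conjE) blast
    have "Lev n \<subseteq> (\<lambda>k. me.mball k (\<tau> n)) ` K"
    proof
      fix B assume "B \<in> Lev n"
      then obtain z where z: "z \<in> M" "B = me.mball z (\<tau> n)" unfolding Lev_def by blast
      then obtain k where "k \<in> K" "z \<in> me.mball k (\<tau> n)" using K(3) by blast
      then show "B \<in> (\<lambda>k. me.mball k (\<tau> n)) ` K" using mball_eq z(2) by blast
    qed
    then show ?thesis using K(1) finite_subset by blast
  qed
  define F where "F = (\<Union>n. Lev n)"
  have cF: "countable F" unfolding F_def using finLev by (simp add: countable_finite)
  define Cf where "Cf k = (if F = {} then {} else from_nat_into F k)" for k
  have CfF: "Cf k = {} \<or> Cf k \<in> F" for k
  proof (cases "F = {}")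
    case False then show ?thesis unfolding Cf_def using from_nat_into[OF False, of k] by simp
  qed (simp add: Cf_def)
  have ballclosed: "openin X (M - me.mball z \<rho>)" for z \<rho>
    unfolding tope[symmetric] me.openin_mtopology
  proof (intro conjI allI impI)
    show "M - me.mball z \<rho> \<subseteq> M" by blast
    fix w assume w: "w \<in> M - me.mball z \<rho>"
    have "me.mball w \<rho> \<subseteq> M - me.mball z \<rho>"
    proof (rule ccontr)
      assume "\<not> me.mball w \<rho> \<subseteq> M - me.mball z \<rho>"
      then obtain y where y: "y \<in> me.mball w \<rho>" "y \<in> me.mball z \<rho>" using me.mball_subset_mspace by blast
      then have "me.mball w \<rho> \<subseteq> me.mball z \<rho>" using ultra_ball_nest[OF ue y] by blast
      moreover have "\<rho> > 0" using y by (meson le_less_trans me.in_mball me.nonneg)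
      ultimately show False using w by auto
    qed
    show "\<exists>r>0. me.mball w r \<subseteq> M - me.mball z \<rho>"
    proof (cases "\<rho> > 0")
      case True then show ?thesis using \<open>me.mball w \<rho> \<subseteq> M - me.mball z \<rho>\<close> by blast
    next
      case False
      have "me.mball z \<rho> = {}"
      proof (intro equals0I)
        fix y assume "y \<in> me.mball z \<rho>"
        then have "e z y < \<rho>" by simp
        then show False using False me.nonneg[of z y] by linarith
      qed
      moreover have "me.mball w 1 \<subseteq> M" by (rule me.mball_subset_mspace)
      ultimately show ?thesis by (intro exI[of _ 1]) auto
    qed
  qed
  have Cf_sub: "Cf k \<subseteq> M" for k using CfF[of k] unfolding F_def Lev_def by (auto simp: me.mball_subset_mspace)
  have Cf_open: "openin X (Cf k)" for k
    using CfF[of k] unfolding F_def Lev_def using tope by auto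
  have Cf_closed: "openin X (M - Cf k)" for k
  proof -
    have "Cf k = {} \<or> (\<exists>z \<rho>. Cf k = me.mball z \<rho>)" using CfF[of k] unfolding F_def Lev_def by blast
    then show ?thesis using ballclosed tope by auto
  qed
  have P: "\<exists>K. \<forall>y\<in>M. (\<forall>k\<le>K. y \<in> Cf k \<longleftrightarrow> x \<in> Cf k) \<longrightarrow> e x y < \<rho>" if x: "x \<in> M" and \<rho>: "\<rho> > 0" for x \<rho>
  proof -
    obtain n where n: "\<tau> n < \<rho>" using decz_ex[OF dz \<rho>] by blast
    have BF: "me.mball x (\<tau> n) \<in> F" unfolding F_def Lev_def using x by blast
    then obtain K where K: "from_nat_into F K = me.mball x (\<tau> n)" using from_nat_into_surj[OF cF] by blast
    then have CK: "Cf K = me.mball x (\<tau> n)" unfolding Cf_def using BF by auto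
    have "x \<in> Cf K" unfolding CK using x decz_pos[OF dz, of n] by simp
    then have "e x y < \<rho>" if "y \<in> M" "\<forall>k\<le>K. y \<in> Cf k \<longleftrightarrow> x \<in> Cf k" for y
      using that CK n by auto
    then show ?thesis by blast
  qed
  define V where "V x K = {y \<in> M. \<forall>k\<le>K. y \<in> Cf k \<longleftrightarrow> x \<in> Cf k}" for x K
  define W where "W x k = {y \<in> M. y \<in> Cf k \<longleftrightarrow> x \<in> Cf k}" for x k
  have Wopen: "openin X (W x k)" for x k
  proof (cases "x \<in> Cf k")
    case True
    then have "W x k = Cf k" unfolding W_def using Cf_sub by auto
    then show ?thesis using Cf_open by simp
  next
    case False
    then have "W x k = M - Cf k" unfolding W_def by auto
    then show ?thesis using Cf_closed by simp
  qed
  have Vopen: "openin X (V x K)" for x K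
  proof (induction K)
    case 0
    have "V x 0 = W x 0" unfolding V_def W_def by auto
    then show ?case using Wopen by simp
  next
    case (Suc K)
    have "V x (Suc K) = V x K \<inter> W x (Suc K)" unfolding V_def W_def using le_Suc_eq by auto
    then show ?case using Suc.IH Wopen by auto
  qed
  have xV: "x \<in> M \<Longrightarrow> x \<in> V x K" for x K unfolding V_def by simp
  define fd where "fd x y = (LEAST k. (x \<in> Cf k) \<noteq> (y \<in> Cf k))" for x y
  have diffex: "\<exists>k. (x \<in> Cf k) \<noteq> (y \<in> Cf k)" if "x \<in> M" "y \<in> M" "x \<noteq> y" for x y
  proof (rule ccontr)
    assume "\<not> ?thesis"
    moreover have "e x y > 0" using ms_pos[OF mse that] .
    ultimately show False using P[OF that(1) \<open>e x y > 0\<close>] that(2) by auto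
  qed
  have fd_diff: "(x \<in> Cf (fd x y)) \<noteq> (y \<in> Cf (fd x y))" if "x \<in> M" "y \<in> M" "x \<noteq> y" for x y
    unfolding fd_def using diffex[OF that] by (rule LeastI_ex)
  have fd_agree: "(x \<in> Cf k) = (y \<in> Cf k)" if "k < fd x y" for x y k
    using not_less_Least[OF that[unfolded fd_def]] by blast
  have fd_comm: "fd x y = fd y x" for x y
  proof -
    have "(\<lambda>k. (x \<in> Cf k) \<noteq> (y \<in> Cf k)) = (\<lambda>k. (y \<in> Cf k) \<noteq> (x \<in> Cf k))" by auto
    then show ?thesis unfolding fd_def by simp
  qed
  define tr where "tr x y = (if x = y then 0 else \<tau> (fd x y))" for x y
  have tr_nonneg: "0 \<le> tr x y" for x y unfolding tr_def using decz_pos[OF dz] less_imp_le by auto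
  have tr_le: "tr x y \<le> s" for x y unfolding tr_def using \<tau>s s0 by auto
  have tr_comm: "tr x y = tr y x" for x y unfolding tr_def using fd_comm by auto
  have tr_ultra: "tr x y \<le> max (tr x z) (tr z y)" if "x \<in> M" "y \<in> M" "z \<in> M" for x y z
  proof (cases "x = y \<or> x = z \<or> z = y")
    case True
    then consider "x = y" | "x = z" | "z = y" by blast
    then show ?thesis
    proof cases
      case 1
      then have "tr x y = 0" by (simp add: tr_def)
      then show ?thesis using tr_nonneg[of x z] by (simp add: le_max_iff_disj)
    next
      case 2 then show ?thesis by (simp add: le_max_iff_disj)
    next
      case 3 then show ?thesis by (simp add: le_max_iff_disj)
    qed
  next
    case False
    define m where "m = min (fd x z) (fd z y)"
    have "\<not> fd x y < m"
    proof
      assume "fd x y < m"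
      then have "(x \<in> Cf (fd x y)) = (z \<in> Cf (fd x y))" "(z \<in> Cf (fd x y)) = (y \<in> Cf (fd x y))"
        using fd_agree unfolding m_def by auto
      then show False using fd_diff[of x y] that False by auto
    qed
    then have "\<tau> (fd x y) \<le> \<tau> m" using decz_le[OF dz] by simp
    moreover have "\<tau> m \<le> max (\<tau> (fd x z)) (\<tau> (fd z y))" unfolding m_def by (simp add: min_def)
    ultimately show ?thesis unfolding tr_def using False by auto
  qed
  have tr_pos: "x \<noteq> y \<Longrightarrow> tr x y > 0" for x y unfolding tr_def using decz_pos[OF dz] by simp
  define d where "d x y = (if x \<in> M \<and> y \<in> M then (if s < e x y then e x y else tr x y) else 0)" for x y
  have d_nonneg: "0 \<le> d x y" for x y unfolding d_def using tr_nonneg s0 by auto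
  have d_comm: "d x y = d y x" for x y unfolding d_def using tr_comm me.commute by auto
  have d_zero: "d x y = 0 \<longleftrightarrow> x = y" if "x \<in> M" "y \<in> M" for x y
  proof (cases "x = y")
    case True then show ?thesis using that s0 unfolding d_def tr_def by simp
  next
    case False
    then show ?thesis using that s0 tr_pos[OF False] unfolding d_def by auto
  qed
  have d_ultra: "d x y \<le> max (d x z) (d z y)" if xyz: "x \<in> M" "y \<in> M" "z \<in> M" for x y z
  proof (cases "s < e x y")
    case True
    have u: "e x y \<le> max (e x z) (e z y)" using ule xyz by blast
    show ?thesis
    proof (cases "e z y \<le> e x z")
      case c: True
      then have "e x y \<le> e x z" using u by simp
      then have "s < e x z" using True by simp
      then show ?thesis using True \<open>e x y \<le> e x z\<close> xyz unfolding d_def by simp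
    next
      case c: False
      then have "e x y \<le> e z y" using u by simp
      then have "s < e z y" using True by simp
      then show ?thesis using True \<open>e x y \<le> e z y\<close> xyz unfolding d_def by simp
    qed
  next
    case False
    then have dxy: "d x y = tr x y" unfolding d_def using xyz by simp
    show ?thesis
    proof (cases "s < e x z \<or> s < e z y")
      case True
      then have "s < max (d x z) (d z y)" unfolding d_def using xyz by auto
      then show ?thesis using dxy tr_le[of x y] by simp
    next
      case c: False
      then have "d x z = tr x z" "d z y = tr z y" unfolding d_def using xyz by auto
      then show ?thesis using dxy tr_ultra[OF xyz] by simp
    qed
  qed
  have ud: "ultrametric_on M d" by (rule ultra_metric_intro) (use d_nonneg d_comm d_zero d_ultra in auto)
  then have msd: "Metric_space M d" unfolding ultrametric_on_def by simp
  have topd: "Metric_space.mtopology M d = Metric_space.mtopology M e"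
  proof (rule mtop_eq[OF msd mse])
    fix x \<rho> assume x: "x \<in> M" and \<rho>: "(\<rho>::real) > 0"
    obtain K where K: "\<tau> K < \<rho>" using decz_ex[OF dz \<rho>] by blast
    have "openin me.mtopology (V x K)" using Vopen tope by simp
    then obtain \<delta> where \<delta>: "\<delta> > 0" "me.mball x \<delta> \<subseteq> V x K"
      using xV[OF x] me.openin_mtopology by blast
    have "\<forall>y\<in>M. e x y < min \<delta> s \<longrightarrow> d x y < \<rho>"
    proof (intro ballI impI)
      fix y assume y: "y \<in> M" "e x y < min \<delta> s"
      then have dxy: "d x y = tr x y" unfolding d_def using x by simp
      have yV: "y \<in> V x K" using \<delta>(2) x y by auto
      show "d x y < \<rho>"
      proof (cases "x = y")
        case True then show ?thesis using dxy \<rho> unfolding tr_def by simp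
      next
        case False
        have "\<not> fd x y \<le> K"
        proof
          assume "fd x y \<le> K"
          then have "(y \<in> Cf (fd x y)) = (x \<in> Cf (fd x y))" using yV unfolding V_def by blast
          then show False using fd_diff[OF x y(1) False] by simp
        qed
        then have "\<tau> (fd x y) < \<tau> K" using decz_less[OF dz] by simp
        then show ?thesis using dxy K False unfolding tr_def by simp
      qed
    qed
    then show "\<exists>r'>0. \<forall>y\<in>M. e x y < r' \<longrightarrow> d x y < \<rho>" using \<delta>(1) s0
      by (intro exI[of _ "min \<delta> s"]) auto
  next
    fix x \<rho> assume x: "x \<in> M" and \<rho>: "(\<rho>::real) > 0"
    obtain K where K: "\<forall>y\<in>M. (\<forall>k\<le>K. y \<in> Cf k \<longleftrightarrow> x \<in> Cf k) \<longrightarrow> e x y < \<rho>" using P[OF x \<rho>] by blast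
    have "\<forall>y\<in>M. d x y < \<tau> K \<longrightarrow> e x y < \<rho>"
    proof (intro ballI impI)
      fix y assume y: "y \<in> M" "d x y < \<tau> K"
      have "\<not> s < e x y" using y x \<tau>s[of K] unfolding d_def by auto
      then have dxy: "d x y = tr x y" unfolding d_def using x y by simp
      show "e x y < \<rho>"
      proof (cases "x = y")
        case True then show ?thesis using \<rho> x by simp
      next
        case False
        then have "\<tau> (fd x y) < \<tau> K" using dxy y unfolding tr_def by simp
        then have "K < fd x y" using decz_le[OF dz, of "fd x y" K] by (meson not_le)
        then have "\<forall>k\<le>K. y \<in> Cf k \<longleftrightarrow> x \<in> Cf k" using fd_agree by (metis le_less_trans)
        then show ?thesis using K y by blast
      qed
    qed
    then show "\<exists>r'>0. \<forall>y\<in>M. d x y < r' \<longrightarrow> e x y < \<rho>" using decz_pos[OF dz, of K] by blast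
  qed
  have dUlt: "d \<in> Ult X S"
    unfolding Ult_def
  proof (intro CollectI conjI ballI allI impI)
    show "ultrametric_on (topspace X) d" using ud M_def by simp
    fix x y assume "x \<in> topspace X" "y \<in> topspace X"
    then show "d x y \<in> S" unfolding d_def tr_def M_def using eS \<tau>S S0 M_def by auto
  next
    fix x y assume "x \<notin> topspace X \<or> y \<notin> topspace X"
    then show "d x y = 0" unfolding d_def M_def by auto
  next
    show "Metric_space.mtopology (topspace X) d = X" using topd tope M_def by simp
  qed
  have "UD X S e d \<le> ereal s"
  proof (rule UD_le)
    show "s \<in> S" unfolding s_def using \<tau>S by simp
    show "\<forall>x\<in>topspace X. \<forall>y\<in>topspace X. e x y \<le> max (d x y) s \<and> d x y \<le> max (e x y) s"
      unfolding M_def[symmetric] d_def using tr_le by auto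
  qed
  moreover have "ereal s < ereal r" using \<tau>r unfolding s_def by simp
  ultimately have UDr: "UD X S e d < ereal r" by (rule order.strict_trans1)
  obtain K0 where K0: "finite K0" "K0 \<subseteq> M" "M \<subseteq> (\<Union>x\<in>K0. me.mball x s)"
    using tb'[OF s0] by (elim exE conjE) blast
  have dbl0: "\<forall>A. A \<subseteq> M \<longrightarrow> finite A \<longrightarrow> 2 \<le> card A \<longrightarrow>
        real (card A) \<le> (2 * real (card K0) + 1) * (diam_d d A / sep_d d A) powr (1::real)"
  proof (intro allI impI)
    fix A assume A: "A \<subseteq> M" "finite A" "2 \<le> card A"
    obtain x0 y0 where xy0: "x0\<in>A" "y0\<in>A" "x0\<noteq>y0" using card2_obtain[OF A(3)] by blast
    have pos: "\<And>x y. x\<in>A \<Longrightarrow> y\<in>A \<Longrightarrow> x\<noteq>y \<Longrightarrow> d x y > 0" using ms_pos[OF msd] A(1) by blast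
    define q where "q = diam_d d A / sep_d d A"
    have q1: "1 \<le> q" unfolding q_def by (rule ratio_ge1[OF A(2) xy0 pos])
    have sp: "sep_d d A > 0" by (rule sep_pos[OF A(2) xy0 pos])
    define Ak where "Ak k = {a \<in> A. e k a < s}" for k
    have bound: "real (card (Ak k)) \<le> 2 * q" if k: "k \<in> K0" for k
    proof (cases "card (Ak k) \<le> 1")
      case True then show ?thesis using q1 by simp
    next
      case False
      define B where "B = Ak k"
      have B: "B \<subseteq> A" "finite B" "2 \<le> card B" using False A(2) unfolding B_def Ak_def by auto
      have BM: "B \<subseteq> M" using B(1) A(1) by blast
      have kM: "k \<in> M" using k K0(2) by blast
      have dtr: "d a b = tr a b" if "a \<in> B" "b \<in> B" for a b
      proof -
        have "e a b \<le> max (e a k) (e k b)" using ule BM kM that by blast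
        moreover have "e k a < s" "e k b < s" using that unfolding B_def Ak_def by auto
        moreover have "e a k = e k a" using me.commute by simp
        ultimately have "e a b < s" by simp
        then show ?thesis unfolding d_def using BM that by auto
      qed
      define FD where "FD = {fd a b |a b. a \<in> B \<and> b \<in> B \<and> a \<noteq> b}"
      have fFD: "finite FD" unfolding FD_def using finite_PA[OF B(2), of fd "\<lambda>a b. a \<noteq> b"] .
      obtain a1 b1 where ab1: "a1 \<in> B" "b1 \<in> B" "a1 \<noteq> b1" using card2_obtain[OF B(3)] by blast
      have neFD: "FD \<noteq> {}" unfolding FD_def using ab1 by blast
      define i where "i = Min FD"
      define j where "j = Max FD"
      have ij: "i \<le> fd a b \<and> fd a b \<le> j" if "a \<in> B" "b \<in> B" "a \<noteq> b" for a b
      proof -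
        have "fd a b \<in> FD" unfolding FD_def using that by blast
        then show ?thesis unfolding i_def j_def using fFD by simp
      qed
      have "i \<in> FD" unfolding i_def using fFD neFD by simp
      then obtain a b where iw: "a \<in> B" "b \<in> B" "a \<noteq> b" "fd a b = i" unfolding FD_def by blast
      then have di: "d a b = \<tau> i" using dtr unfolding tr_def by simp
      have "j \<in> FD" unfolding j_def using fFD neFD by simp
      then obtain a' b' where jw: "a' \<in> B" "b' \<in> B" "a' \<noteq> b'" "fd a' b' = j" unfolding FD_def by blast
      then have dj: "d a' b' = \<tau> j" using dtr unfolding tr_def by simp
      have "i \<le> j" using ij[OF iw(1-3)] iw(4) by simp
      define \<phi> where "\<phi> b = {k \<in> {i..j}. b \<in> Cf k}" for b
      have inj: "inj_on \<phi> B"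
      proof (rule inj_onI, rule ccontr)
        fix a b assume ab: "a \<in> B" "b \<in> B" "\<phi> a = \<phi> b" "a \<noteq> b"
        have "fd a b \<in> {i..j}" using ij[OF ab(1,2,4)] by simp
        moreover have "(a \<in> Cf (fd a b)) \<noteq> (b \<in> Cf (fd a b))" using fd_diff ab BM by blast
        ultimately have "(fd a b \<in> \<phi> a) \<noteq> (fd a b \<in> \<phi> b)" unfolding \<phi>_def by simp
        then show False using ab(3) by simp
      qed
      have "card B \<le> card (Pow {i..j})"
        by (rule card_inj_on_le[OF inj]) (auto simp: \<phi>_def)
      also have "\<dots> = 2 ^ (Suc j - i)" by (simp add: card_Pow)
      also have "\<dots> = 2 * 2 ^ (j - i)" using \<open>i \<le> j\<close> by (simp add: Suc_diff_le)
      finally have cBn: "card B \<le> 2 * 2 ^ (j - i)" .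
      have cB: "real (card B) \<le> 2 * 2 ^ (j - i)"
        using of_nat_le_iff[where 'a=real, THEN iffD2, OF cBn] by simp
      have rat: "\<tau> j * 2 ^ (j - i) \<le> \<tau> i" using tau_ratio[OF \<tau>h, of i "j - i"] \<open>i \<le> j\<close> by simp
      have tj: "\<tau> j > 0" using decz_pos[OF dz] by simp
      have "2 ^ (j - i) \<le> \<tau> i / \<tau> j" using rat tj by (simp add: field_simps)
      also have "\<dots> \<le> diam_d d A / sep_d d A"
      proof (rule frac_le)
        show ti: "\<tau> i \<le> diam_d d A" using le_diam[OF A(2), of a b d] di iw B(1) by auto
        show "0 \<le> diam_d d A" using ti decz_pos[OF dz, of i] by simp
        show "0 < sep_d d A" by (rule sp)
        show "sep_d d A \<le> \<tau> j" using sep_le[OF A(2), of a' b' d] dj jw B(1) by auto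
      qed
      finally have "(2::real) ^ (j - i) \<le> q" unfolding q_def .
      then show ?thesis using cB unfolding B_def by simp
    qed
    have AU: "A = (\<Union>k\<in>K0. Ak k)"
    proof
      show "A \<subseteq> (\<Union>k\<in>K0. Ak k)"
      proof
        fix a assume a: "a \<in> A"
        then obtain k where "k \<in> K0" "a \<in> me.mball k s" using K0(3) A(1) by blast
        then show "a \<in> (\<Union>k\<in>K0. Ak k)" unfolding Ak_def using a by auto
      qed
    qed (auto simp: Ak_def)
    have "card A \<le> (\<Sum>k\<in>K0. card (Ak k))" by (subst AU) (rule card_UN_le[OF K0(1)])
    then have "real (card A) \<le> real (\<Sum>k\<in>K0. card (Ak k))" by (rule of_nat_mono)
    also have "\<dots> = (\<Sum>k\<in>K0. real (card (Ak k)))" by (rule of_nat_sum)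
    also have "\<dots> \<le> real (card K0) * (2 * q)" using bound sum_bounded_above[of K0 "\<lambda>k. real (card (Ak k))" "2*q"] by simp
    also have "\<dots> \<le> (2 * real (card K0) + 1) * q" using q1 by (simp add: algebra_simps)
    also have "\<dots> = (2 * real (card K0) + 1) * q powr 1" using q1 by simp
    finally show "real (card A) \<le> (2 * real (card K0) + 1) * (diam_d d A / sep_d d A) powr 1"
      unfolding q_def .
  qed
  have "(0::real) < 1" "1 \<le> 2 * real (card K0) + 1" by simp_all
  then have dbl: "doubling_on M d" unfolding doubling_on_def using dbl0 by blast
  show ?thesis using dUlt dbl UDr M_def by blast
qed



theorem theorem1p3:
  fixes X :: "'a topology" and S :: "real set"
  assumes "range_set S" and "countable_coinitiality S" and "ultrametrizable_space X"
  shows "compact_space X \<longleftrightarrow>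
    (let D = {d \<in> Ult X S. doubling_on (topspace X) d} in
       (ud_topology X S) closure_of D = topspace (ud_topology X S)
       \<and> fsigma_in (ud_topology X S) D)"
proof -
  define D where "D = {d \<in> Ult X S. doubling_on (topspace X) d}"
  have fs: "fsigma_in (ud_topology X S) D" using D_fsigma unfolding D_def .
  show ?thesis unfolding Let_def D_def[symmetric]
  proof
    assume cp: "compact_space X"
    have "topspace (ud_topology X S) \<subseteq> (ud_topology X S) closure_of D"
    proof
      fix e assume "e \<in> topspace (ud_topology X S)"
      then have eU: "e \<in> Ult X S" using topspace_ud by blast
      show "e \<in> (ud_topology X S) closure_of D" unfolding in_closure_of
      proof (intro conjI allI impI)
        show "e \<in> topspace (ud_topology X S)" using eU topspace_ud by blast
        fix T assume T: "e \<in> T \<and> openin (ud_topology X S) T"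
        then have uo: "ud_open X S T" using openin_ud by metis
        have "\<exists>r>0. {e' \<in> Ult X S. UD X S e e' < ereal r} \<subseteq> T"
          using uo T unfolding ud_open_def by simp
        then obtain r where r: "r > 0" "{e' \<in> Ult X S. UD X S e e' < ereal r} \<subseteq> T"
          by (elim exE conjE) simp
        have "\<exists>d\<in>Ult X S. doubling_on (topspace X) d \<and> UD X S e d < ereal r"
          by (rule compact_part[OF assms(1,2) cp eU r(1)])
        then obtain d where d: "d \<in> Ult X S" "doubling_on (topspace X) d" "UD X S e d < ereal r"
          by (elim bexE conjE) simp
        then have "d \<in> T" using r(2) by blast
        then show "\<exists>y. y \<in> D \<and> y \<in> T" using d unfolding D_def by blast
      qed
    qed
    then have "(ud_topology X S) closure_of D = topspace (ud_topology X S)"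
      by (rule subset_antisym[OF closure_of_subset_topspace])
    then show "(ud_topology X S) closure_of D = topspace (ud_topology X S) \<and> fsigma_in (ud_topology X S) D"
      using fs by (rule conjI)
  next
    assume h: "(ud_topology X S) closure_of D = topspace (ud_topology X S) \<and> fsigma_in (ud_topology X S) D"
    show "compact_space X"
    proof (rule ccontr)
      assume "\<not> compact_space X"
      have "(ud_topology X S) closure_of D \<noteq> topspace (ud_topology X S)"
        using noncompact_part[OF assms \<open>\<not> compact_space X\<close>] unfolding D_def .
      then show False using h by simp
    qed
  qed
qed

end
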